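(* Let $\mathbb{Z}/2\mathbb{Z}$ act on $\mathbb{R}^2$ by $0\cdot(u,v)^T=(u,v)^T$ and $1\cdot(u,v)^T=(v,u)^T$. Let $L=\{(u,u)^T:u\in\mathbb{R}\}$, $HP_A=\{(u,v)^T: v>u\}$, $HP_B=\{(u,v)^T:v<u\}$. Let $X$ be a random variable in $\mathbb{R}^2$ with $\mathbb{E}(\|X\|^2)<+\infty$ and $t_0=\mathbb{E}(X)$. (1) If $t_0\in L$, then $[t_0]$ is a Fréchet mean of $[X]$ if and only if $\mathbb{P}(X\in L)=1$. If $t_0\in HP_A$ (resp. $HP_B$), then $[t_0]$ is a Fréchet mean of $[X]$ if and only if $\mathbb{P}(X\in HP_A\cup L)=1$ (resp. $\mathbb{P}(X\in HP_B\cup L)=1$). (2) If $X\sim\mathcal{N}(t_0,s^2\mathrm{Id}_2)$ with $s>0$, then the Fréchet mean of $[X]$ exists and is unique; it has a representative $m_\star$ lying on the line through $t_0$ perpendicular to $L$, and with $d=\mathrm{dist}(t_0,L)$ the consistency bias $\tilde\rho(d,s)=d_Q([t_0],[m_\star])$ equals $$\tilde\rho(d,s)=s\,\frac{2}{\pi}\int_{d/s}^{+\infty} r^2\exp\Big(-\frac{r^2}{2}\Big)\,g\Big(\frac{d}{rs}\Big)\,dr,$$ where $g(x)=\sin(\arccos x)-x\arccos x$ for $x\in[0,1]$ (a nonnegative function). Moreover: (a) if $d>0$, then $\tilde\rho(d,s)\sim s\,\frac{2}{\pi}\int_0^{+\infty}r^2\exp(-r^2/2)\,dr$ as $s\to+\infty$;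 (b) if $d>0$, then $\tilde\rho(d,s)=o(s^k)$ as $s\to0$ for every $k\in\mathbb{N}$; (c) $s\mapsto\tilde\rho(0,s)$ is linear in $s$.
   Context: $\mathbb{R}^2$ carries the Euclidean norm. $[m]$ denotes the orbit of $m$, $d_Q([a],[b])=\min_{\tau\in\mathbb{Z}/2\mathbb{Z}}\|\tau\cdot a-b\|$, $F(m)=\mathbb{E}\big(\min_{\tau}\|\tau\cdot X-m\|^2\big)$, and $[m_\star]$ is a Fréchet mean of $[X]$ if $m_\star$ is a global minimiser of $F$. *)

theory Defs
  imports "HOL-Probability.Probability" "HOL-Library.Landau_Symbols"
begin

text \<open>Action of Z/2Z (represented by bool: False = 0, True = 1) on R^2 = real \<times> real.\<close>
fun z2act :: "bool \<Rightarrow> real \<times> real \<Rightarrow> real \<times> real" where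
  "z2act False p = p"
| "z2act True p = (snd p, fst p)"

definition orbit :: "real \<times> real \<Rightarrow> (real \<times> real) set" where
  "orbit m = range (\<lambda>\<tau>. z2act \<tau> m)"

definition dQ :: "real \<times> real \<Rightarrow> real \<times> real \<Rightarrow> real" where
  "dQ a b = Min (range (\<lambda>\<tau>. norm (z2act \<tau> a - b)))"

definition Lline :: "(real \<times> real) set" where
  "Lline = {(u, u) | u. True}"

definition HPA :: "(real \<times> real) set" where
  "HPA = {(u, v). v > u}"

definition HPB :: "(real \<times> real) set" where
  "HPB = {(u, v). v < u}"

definition frechetF :: "'w measure \<Rightarrow> ('w \<Rightarrow> real \<times> real) \<Rightarrow> real \<times> real \<Rightarrow> real" where
  "frechetF M X m = (LINT \<omega>|M. Min (range (\<lambda>\<tau>. (norm (z2act \<tau> (X \<omega>) - m))\<^sup>2)))"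

definition frechet_mean :: "'w measure \<Rightarrow> ('w \<Rightarrow> real \<times> real) \<Rightarrow> real \<times> real \<Rightarrow> bool" where
  "frechet_mean M X m \<longleftrightarrow> (\<forall>m'. frechetF M X m \<le> frechetF M X m')"

definition gauss2 :: "real \<times> real \<Rightarrow> real \<Rightarrow> real \<times> real \<Rightarrow> ennreal" where
  "gauss2 t0 s p = ennreal (normal_density (fst t0) s (fst p) * normal_density (snd t0) s (snd p))"

definition gfun :: "real \<Rightarrow> real" where
  "gfun x = sin (arccos x) - x * arccos x"

definition rho_tilde :: "real \<Rightarrow> real \<Rightarrow> real" where
  "rho_tilde d s = s * (2 / pi) *
     (LBINT r:{d/s..}. r\<^sup>2 * exp (- (r\<^sup>2) / 2) * gfun (d / (r * s)))"

end

theory Submission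
  imports Defs
begin


lemma Min_bool: "Min (range (f::bool \<Rightarrow> 'a::linorder)) = min (f False) (f True)"
proof -
  have "range f = {f False, f True}" by (auto simp: UNIV_bool)
  then show ?thesis by simp
qed

lemma min_sq_abs: "min ((p-q)\<^sup>2) ((p+q)\<^sup>2) = (\<bar>p\<bar>-\<bar>q\<bar>)\<^sup>2" for p q :: real
proof -
  have d: "(p+q)\<^sup>2 - (p-q)\<^sup>2 = 4*(p*q)" by (simp add: power2_eq_square algebra_simps)
  show ?thesis
  proof (cases "p*q \<ge> 0")
    case True
    then have "(p-q)\<^sup>2 \<le> (p+q)\<^sup>2" using d by linarith
    moreover have "(\<bar>p\<bar>-\<bar>q\<bar>)\<^sup>2 = (p-q)\<^sup>2" using True
      by (cases "p \<ge> 0"; cases "q \<ge> 0") (auto simp: power2_eq_square algebra_simps mult_le_0_iff zero_le_mult_iff)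
    ultimately show ?thesis by (simp add: min_def)
  next
    case False
    then have "\<not> (p-q)\<^sup>2 \<le> (p+q)\<^sup>2" using d by linarith
    moreover have "(\<bar>p\<bar>-\<bar>q\<bar>)\<^sup>2 = (p+q)\<^sup>2" using False
      by (cases "p \<ge> 0"; cases "q \<ge> 0") (auto simp: power2_eq_square algebra_simps mult_le_0_iff zero_le_mult_iff)
    ultimately show ?thesis by (simp add: min_def)
  qed
qed

lemma minsq:
  "Min (range (\<lambda>\<tau>. (norm (z2act \<tau> x - m))\<^sup>2)) =
    ((fst x + snd x) - (fst m + snd m))\<^sup>2/2 + (\<bar>snd x - fst x\<bar> - \<bar>snd m - fst m\<bar>)\<^sup>2/2"
proof -
  obtain x1 x2 m1 m2 where x: "x = (x1,x2)" and m: "m = (m1,m2)" by (cases x, cases m)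
  have n: "(norm (p::real\<times>real))\<^sup>2 = (fst p)\<^sup>2 + (snd p)\<^sup>2" for p
    by (cases p) (simp add: norm_Pair)
  have e1: "(x1-m1)\<^sup>2 + (x2-m2)\<^sup>2 = ((x1+x2)-(m1+m2))\<^sup>2/2 + ((x2-x1)-(m2-m1))\<^sup>2/2"
    by (simp add: power2_eq_square field_simps)
  have e2: "(x2-m1)\<^sup>2 + (x1-m2)\<^sup>2 = ((x1+x2)-(m1+m2))\<^sup>2/2 + ((x2-x1)+(m2-m1))\<^sup>2/2"
    by (simp add: power2_eq_square field_simps)
  have e3: "min (((x2-x1)-(m2-m1))\<^sup>2) (((x2-x1)+(m2-m1))\<^sup>2) = (\<bar>x2-x1\<bar> - \<bar>m2-m1\<bar>)\<^sup>2"
    by (rule min_sq_abs)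
  have "min ((x1-m1)\<^sup>2 + (x2-m2)\<^sup>2) ((x2-m1)\<^sup>2 + (x1-m2)\<^sup>2)
     = ((x1+x2)-(m1+m2))\<^sup>2/2 + min (((x2-x1)-(m2-m1))\<^sup>2) (((x2-x1)+(m2-m1))\<^sup>2)/2"
    unfolding e1 e2 by (simp add: min_def)
  then show ?thesis unfolding Min_bool x m using e3 by (simp add: n)
qed


lemma sq_bnd: "(a+b)\<^sup>2 \<le> 2*(a\<^sup>2+b\<^sup>2)" for a b :: real
proof -
  have "0 \<le> (a-b)\<^sup>2" by simp
  then show ?thesis by (simp add: power2_eq_square algebra_simps)
qed

lemma sq_bnd2: "(b-a)\<^sup>2 \<le> 2*(a\<^sup>2+b\<^sup>2)" for a b :: real
proof -
  have "0 \<le> (a+b)\<^sup>2" by simp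
  then show ?thesis by (simp add: power2_eq_square algebra_simps)
qed

locale fsetup =
  fixes M :: "'w measure" and X :: "'w \<Rightarrow> real \<times> real"
  assumes P: "prob_space M"
    and Xm[measurable]: "X \<in> borel_measurable M"
    and Xi: "integrable M (\<lambda>\<omega>. (norm (X \<omega>))\<^sup>2)"
begin

interpretation prob_space M by (rule P)

lemma Xm2[measurable]: "X \<in> measurable M (borel \<Otimes>\<^sub>M borel)"
  using Xm by (simp add: borel_prod)

definition "L \<omega> = fst (X \<omega>) + snd (X \<omega>)"
definition "D \<omega> = snd (X \<omega>) - fst (X \<omega>)"

lemma L_meas[measurable]: "L \<in> borel_measurable M" unfolding L_def[abs_def] by measurable
lemma D_meas[measurable]: "D \<in> borel_measurable M" unfolding D_def[abs_def] by measurable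

lemma normsq: "(norm (X \<omega>))\<^sup>2 = (fst (X \<omega>))\<^sup>2 + (snd (X \<omega>))\<^sup>2"
  by (cases "X \<omega>") (simp add: norm_Pair)

lemma L2i: "integrable M (\<lambda>\<omega>. (L \<omega>)\<^sup>2)"
proof (rule Bochner_Integration.integrable_bound[OF integrable_mult_right[OF Xi, of 2]])
  show "AE \<omega> in M. norm ((L \<omega>)\<^sup>2) \<le> norm (2 * (norm (X \<omega>))\<^sup>2)"
    unfolding normsq L_def using sq_bnd by (auto intro!: AE_I2)
qed measurable

lemma D2i: "integrable M (\<lambda>\<omega>. (D \<omega>)\<^sup>2)"
proof (rule Bochner_Integration.integrable_bound[OF integrable_mult_right[OF Xi, of 2]])
  show "AE \<omega> in M. norm ((D \<omega>)\<^sup>2) \<le> norm (2 * (norm (X \<omega>))\<^sup>2)"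
    unfolding normsq D_def using sq_bnd2 by (auto intro!: AE_I2)
qed measurable

lemma Li: "integrable M L"
  by (rule square_integrable_imp_integrable[OF L_meas L2i])
lemma Di: "integrable M D"
  by (rule square_integrable_imp_integrable[OF D_meas D2i])
lemma aDi: "integrable M (\<lambda>\<omega>. \<bar>D \<omega>\<bar>)"
  using Di by simp

definition "alpha = integral\<^sup>L M L"
definition "beta = integral\<^sup>L M (\<lambda>\<omega>. \<bar>D \<omega>\<bar>)"
definition "C0 = (integral\<^sup>L M (\<lambda>\<omega>. (L \<omega>)\<^sup>2) - alpha\<^sup>2 + integral\<^sup>L M (\<lambda>\<omega>. (D \<omega>)\<^sup>2) - beta\<^sup>2)/2"

lemma F_formula:
  "frechetF M X m = C0 + ((fst m + snd m) - alpha)\<^sup>2/2 + (\<bar>snd m - fst m\<bar> - beta)\<^sup>2/2"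
proof -
  let ?l = "fst m + snd m" and ?d = "\<bar>snd m - fst m\<bar>"
  have pw: "Min (range (\<lambda>\<tau>. (norm (z2act \<tau> (X \<omega>) - m))\<^sup>2)) =
     ((1/2) * (L \<omega>)\<^sup>2 + (1/2) * (D \<omega>)\<^sup>2) - (?l * L \<omega> + ?d * \<bar>D \<omega>\<bar>) + (?l\<^sup>2 + ?d\<^sup>2)/2" for \<omega>
    unfolding minsq L_def D_def by (simp add: power2_eq_square field_simps)
  have i1: "integrable M (\<lambda>\<omega>. (1/2) * (L \<omega>)\<^sup>2 + (1/2) * (D \<omega>)\<^sup>2)"
    using L2i D2i by auto
  have i2: "integrable M (\<lambda>\<omega>. ?l * L \<omega> + ?d * \<bar>D \<omega>\<bar>)"
    using Li aDi by auto
  have "frechetF M X m = integral\<^sup>L M (\<lambda>\<omega>. ((1/2) * (L \<omega>)\<^sup>2 + (1/2) * (D \<omega>)\<^sup>2) - (?l * L \<omega> + ?d * \<bar>D \<omega>\<bar>) + (?l\<^sup>2 + ?d\<^sup>2)/2)"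
    unfolding frechetF_def pw ..
  also have "\<dots> = ((1/2) * integral\<^sup>L M (\<lambda>\<omega>. (L \<omega>)\<^sup>2) + (1/2) * integral\<^sup>L M (\<lambda>\<omega>. (D \<omega>)\<^sup>2))
       - (?l * alpha + ?d * beta) + (?l\<^sup>2 + ?d\<^sup>2)/2"
    using i1 i2 L2i D2i Li aDi unfolding alpha_def beta_def
    by (simp add: integral_add integral_diff prob_space)
  also have "\<dots> = C0 + (?l - alpha)\<^sup>2/2 + (?d - beta)\<^sup>2/2"
    unfolding C0_def by (simp add: power2_eq_square field_simps)
  finally show ?thesis .
qed

lemma beta_nonneg: "0 \<le> beta"
  unfolding beta_def by simp

lemma FM: "frechet_mean M X m \<longleftrightarrow> fst m + snd m = alpha \<and> \<bar>snd m - fst m\<bar> = beta"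
proof
  assume fm: "frechet_mean M X m"
  define m' where "m' = ((alpha - beta)/2, (alpha + beta)/2)"
  have "frechetF M X m' = C0"
    unfolding F_formula m'_def using beta_nonneg by (simp add: field_simps)
  with fm have "frechetF M X m \<le> C0" unfolding frechet_mean_def by metis
  then have "((fst m + snd m) - alpha)\<^sup>2/2 + (\<bar>snd m - fst m\<bar> - beta)\<^sup>2/2 \<le> 0"
    unfolding F_formula by simp
  moreover have "0 \<le> ((fst m + snd m) - alpha)\<^sup>2/2" "0 \<le> (\<bar>snd m - fst m\<bar> - beta)\<^sup>2/2" by auto
  ultimately have "((fst m + snd m) - alpha)\<^sup>2 = 0" "(\<bar>snd m - fst m\<bar> - beta)\<^sup>2 = 0" by linarith+
  then show "fst m + snd m = alpha \<and> \<bar>snd m - fst m\<bar> = beta" by simp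
next
  assume "fst m + snd m = alpha \<and> \<bar>snd m - fst m\<bar> = beta"
  then show "frechet_mean M X m"
    unfolding frechet_mean_def F_formula by simp
qed

lemma Xint: "integrable M X"
proof -
  have "integrable M (\<lambda>\<omega>. norm (X \<omega>))"
    by (rule square_integrable_imp_integrable) (use Xi in auto)
  then show ?thesis
    by (rule Bochner_Integration.integrable_bound) auto
qed

lemma t0_fst: "fst (integral\<^sup>L M X) = integral\<^sup>L M (\<lambda>\<omega>. fst (X \<omega>))"
  by (rule integral_bounded_linear[OF bounded_linear_fst Xint, symmetric])
lemma t0_snd: "snd (integral\<^sup>L M X) = integral\<^sup>L M (\<lambda>\<omega>. snd (X \<omega>))"
  by (rule integral_bounded_linear[OF bounded_linear_snd Xint, symmetric])

lemma fsti: "integrable M (\<lambda>\<omega>. fst (X \<omega>))"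
  using integrable_bounded_linear[OF bounded_linear_fst Xint] by simp
lemma sndi: "integrable M (\<lambda>\<omega>. snd (X \<omega>))"
  using integrable_bounded_linear[OF bounded_linear_snd Xint] by simp

lemma t0_alpha: "fst (integral\<^sup>L M X) + snd (integral\<^sup>L M X) = alpha"
  unfolding t0_fst t0_snd alpha_def L_def[abs_def] using fsti sndi by simp

lemma t0_delta: "snd (integral\<^sup>L M X) - fst (integral\<^sup>L M X) = integral\<^sup>L M D"
  unfolding t0_fst t0_snd D_def[abs_def] using fsti sndi by simp

lemma delta_le_beta: "\<bar>integral\<^sup>L M D\<bar> \<le> beta"
  unfolding beta_def using integral_norm_bound[of M D] by simp

lemma AE_set_iff: "(AE \<omega> in M. \<omega> \<in> {\<omega> \<in> space M. P \<omega>}) \<longleftrightarrow> (AE \<omega> in M. P \<omega>)"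
  by (auto elim!: AE_mp intro!: AE_I2)

lemma memL: "x \<in> Lline \<longleftrightarrow> snd x - fst x = 0" by (cases x) (auto simp: Lline_def)
lemma memA: "x \<in> HPA \<union> Lline \<longleftrightarrow> snd x - fst x \<ge> 0" by (cases x) (auto simp: Lline_def HPA_def)
lemma memB: "x \<in> HPB \<union> Lline \<longleftrightarrow> snd x - fst x \<le> 0" by (cases x) (auto simp: Lline_def HPB_def)
lemma memA': "x \<in> HPA \<longleftrightarrow> snd x - fst x > 0" by (cases x) (auto simp: HPA_def)
lemma memB': "x \<in> HPB \<longleftrightarrow> snd x - fst x < 0" by (cases x) (auto simp: HPB_def)

lemma probL: "measure M {\<omega> \<in> space M. X \<omega> \<in> Lline} = 1 \<longleftrightarrow> (AE \<omega> in M. D \<omega> = 0)"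
proof -
  have e: "{\<omega> \<in> space M. X \<omega> \<in> Lline} = {\<omega> \<in> space M. D \<omega> = 0}"
    unfolding memL D_def by simp
  have s: "{\<omega> \<in> space M. D \<omega> = 0} \<in> sets M" by measurable
  show ?thesis unfolding e prob_eq_1[OF s] AE_set_iff ..
qed
lemma probA: "measure M {\<omega> \<in> space M. X \<omega> \<in> HPA \<union> Lline} = 1 \<longleftrightarrow> (AE \<omega> in M. D \<omega> \<ge> 0)"
proof -
  have e: "{\<omega> \<in> space M. X \<omega> \<in> HPA \<union> Lline} = {\<omega> \<in> space M. D \<omega> \<ge> 0}"
    unfolding memA D_def by simp
  have s: "{\<omega> \<in> space M. D \<omega> \<ge> 0} \<in> sets M" by measurable
  show ?thesis unfolding e prob_eq_1[OF s] AE_set_iff ..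
qed
lemma probB: "measure M {\<omega> \<in> space M. X \<omega> \<in> HPB \<union> Lline} = 1 \<longleftrightarrow> (AE \<omega> in M. D \<omega> \<le> 0)"
proof -
  have e: "{\<omega> \<in> space M. X \<omega> \<in> HPB \<union> Lline} = {\<omega> \<in> space M. D \<omega> \<le> 0}"
    unfolding memB D_def by simp
  have s: "{\<omega> \<in> space M. D \<omega> \<le> 0} \<in> sets M" by measurable
  show ?thesis unfolding e prob_eq_1[OF s] AE_set_iff ..
qed

lemma int_beta0: "beta = 0 \<longleftrightarrow> (AE \<omega> in M. D \<omega> = 0)"
  unfolding beta_def by (subst integral_nonneg_eq_0_iff_AE) (use aDi in auto)

lemma int_betaA: "beta = integral\<^sup>L M D \<longleftrightarrow> (AE \<omega> in M. D \<omega> \<ge> 0)"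
proof -
  have "beta - integral\<^sup>L M D = integral\<^sup>L M (\<lambda>\<omega>. \<bar>D \<omega>\<bar> - D \<omega>)"
    unfolding beta_def using aDi Di by simp
  then have "beta = integral\<^sup>L M D \<longleftrightarrow> integral\<^sup>L M (\<lambda>\<omega>. \<bar>D \<omega>\<bar> - D \<omega>) = 0" by linarith
  also have "\<dots> \<longleftrightarrow> (AE \<omega> in M. \<bar>D \<omega>\<bar> - D \<omega> = 0)"
    by (rule integral_nonneg_eq_0_iff_AE) (use aDi Di in auto)
  also have "\<dots> \<longleftrightarrow> (AE \<omega> in M. D \<omega> \<ge> 0)"
    by (rule arg_cong[where f="almost_everywhere M"]) (auto simp: abs_if)
  finally show ?thesis .
qed

lemma int_betaB: "beta = - integral\<^sup>L M D \<longleftrightarrow> (AE \<omega> in M. D \<omega> \<le> 0)"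
proof -
  have "beta + integral\<^sup>L M D = integral\<^sup>L M (\<lambda>\<omega>. \<bar>D \<omega>\<bar> + D \<omega>)"
    unfolding beta_def using aDi Di by simp
  then have "beta = - integral\<^sup>L M D \<longleftrightarrow> integral\<^sup>L M (\<lambda>\<omega>. \<bar>D \<omega>\<bar> + D \<omega>) = 0" by linarith
  also have "\<dots> \<longleftrightarrow> (AE \<omega> in M. \<bar>D \<omega>\<bar> + D \<omega> = 0)"
    by (rule integral_nonneg_eq_0_iff_AE) (use aDi Di in auto)
  also have "\<dots> \<longleftrightarrow> (AE \<omega> in M. D \<omega> \<le> 0)"
    by (rule arg_cong[where f="almost_everywhere M"]) (auto simp: abs_if)
  finally show ?thesis .
qed

lemma fm_t0: "frechet_mean M X (integral\<^sup>L M X) \<longleftrightarrow> \<bar>integral\<^sup>L M D\<bar> = beta"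
  unfolding FM t0_alpha t0_delta by simp

lemma part1:
  defines "t0 \<equiv> integral\<^sup>L M X"
  shows "(t0 \<in> Lline \<longrightarrow>
        (frechet_mean M X t0 \<longleftrightarrow> measure M {\<omega> \<in> space M. X \<omega> \<in> Lline} = 1))
   \<and> (t0 \<in> HPA \<longrightarrow>
        (frechet_mean M X t0 \<longleftrightarrow> measure M {\<omega> \<in> space M. X \<omega> \<in> HPA \<union> Lline} = 1))
   \<and> (t0 \<in> HPB \<longrightarrow>
        (frechet_mean M X t0 \<longleftrightarrow> measure M {\<omega> \<in> space M. X \<omega> \<in> HPB \<union> Lline} = 1))"
proof -
  let ?d = "integral\<^sup>L M D"
  have a: "t0 \<in> Lline \<longleftrightarrow> ?d = 0" unfolding memL t0_def t0_delta ..
  have b: "t0 \<in> HPA \<longleftrightarrow> ?d > 0" unfolding memA' t0_def t0_delta ..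
  have c: "t0 \<in> HPB \<longleftrightarrow> ?d < 0" unfolding memB' t0_def t0_delta ..
  have f: "frechet_mean M X t0 \<longleftrightarrow> \<bar>?d\<bar> = beta" unfolding t0_def by (rule fm_t0)
  have 1: "?d = 0 \<Longrightarrow> (\<bar>?d\<bar> = beta \<longleftrightarrow> beta = 0)" by auto
  have 2: "?d > 0 \<Longrightarrow> (\<bar>?d\<bar> = beta \<longleftrightarrow> beta = ?d)" by auto
  have 3: "?d < 0 \<Longrightarrow> (\<bar>?d\<bar> = beta \<longleftrightarrow> beta = - ?d)" by auto
  show ?thesis
    unfolding a b c f probL probA probB
    using 1 2 3 int_beta0 int_betaA int_betaB by simp
qed

end


lemma dQ_formula:
  assumes "fst a + snd a = fst b + snd b"
  shows "dQ a b = \<bar>\<bar>snd a - fst a\<bar> - \<bar>snd b - fst b\<bar>\<bar> / sqrt 2"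
proof -
  have sq: "Min (range (\<lambda>\<tau>. (norm (z2act \<tau> a - b))\<^sup>2)) = (Min (range (\<lambda>\<tau>. norm (z2act \<tau> a - b))))\<^sup>2"
    unfolding Min_bool by (simp add: min_def power_mono)
  have "(dQ a b)\<^sup>2 = (\<bar>snd a - fst a\<bar> - \<bar>snd b - fst b\<bar>)\<^sup>2/2"
    unfolding dQ_def sq[symmetric] minsq using assms by simp
  moreover have "dQ a b \<ge> 0" unfolding dQ_def Min_bool by simp
  ultimately have "dQ a b = sqrt ((\<bar>snd a - fst a\<bar> - \<bar>snd b - fst b\<bar>)\<^sup>2/2)"
    by (metis real_sqrt_abs abs_of_nonneg)
  then show ?thesis by (simp add: real_sqrt_divide)
qed

lemma infdist_L: "infdist t Lline = \<bar>snd t - fst t\<bar> / sqrt 2"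
proof (rule antisym)
  define u where "u = (fst t + snd t)/2"
  have "(u,u) \<in> Lline" by (auto simp: Lline_def)
  then have "infdist t Lline \<le> dist t (u,u)" by (rule infdist_le)
  also have "dist t (u,u) = \<bar>snd t - fst t\<bar> / sqrt 2"
  proof -
    have "dist t (u,u) = sqrt ((fst t - u)\<^sup>2 + (snd t - u)\<^sup>2)"
      by (cases t) (simp add: dist_Pair_Pair dist_real_def)
    also have "(fst t - u)\<^sup>2 + (snd t - u)\<^sup>2 = (snd t - fst t)\<^sup>2 / 2"
      unfolding u_def by (simp add: power2_eq_square field_simps)
    finally show ?thesis by (simp add: real_sqrt_divide)
  qed
  finally show "infdist t Lline \<le> \<bar>snd t - fst t\<bar> / sqrt 2" .
next
  have ne: "Lline \<noteq> {}" by (auto simp: Lline_def)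
  show "\<bar>snd t - fst t\<bar> / sqrt 2 \<le> infdist t Lline"
    unfolding infdist_notempty[OF ne]
  proof (rule cINF_greatest[OF ne])
    fix p assume "p \<in> Lline"
    then obtain v where p: "p = (v,v)" by (auto simp: Lline_def)
    have "dist t p = sqrt ((fst t - v)\<^sup>2 + (snd t - v)\<^sup>2)"
      unfolding p by (cases t) (simp add: dist_Pair_Pair dist_real_def)
    moreover have "(snd t - fst t)\<^sup>2 / 2 \<le> (fst t - v)\<^sup>2 + (snd t - v)\<^sup>2"
    proof -
      have "0 \<le> (fst t + snd t - 2 * v)\<^sup>2" by simp
      then show ?thesis by (simp add: power2_eq_square field_simps)
    qed
    ultimately have "sqrt ((snd t - fst t)\<^sup>2 / 2) \<le> dist t p" by simp
    then show "\<bar>snd t - fst t\<bar> / sqrt 2 \<le> dist t p" by (simp add: real_sqrt_divide)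
  qed
qed


lemma gfun_nonneg: assumes "0 \<le> x" "x \<le> 1" shows "0 \<le> gfun x"
proof -
  define \<theta> where "\<theta> = arccos x"
  have th: "0 \<le> \<theta>" "\<theta> \<le> pi/2" unfolding \<theta>_def using assms arccos_lbound arccos_le_pi2 by auto
  have g: "gfun x = sin \<theta> - \<theta> * cos \<theta>" unfolding gfun_def \<theta>_def using assms by simp
  have "(\<lambda>t. sin t - t * cos t) 0 \<le> (\<lambda>t. sin t - t * cos t) \<theta>"
  proof (rule DERIV_nonneg_imp_increasing_open[OF th(1)])
    fix t assume t: "0 < t" "t < \<theta>"
    have "((\<lambda>t. sin t - t * cos t) has_real_derivative t * sin t) (at t)"
      by (auto intro!: derivative_eq_intros)
    moreover have "0 \<le> t * sin t" using t th by (intro mult_nonneg_nonneg sin_ge_zero) auto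
    ultimately show "\<exists>y. ((\<lambda>t. sin t - t * cos t) has_real_derivative y) (at t) \<and> 0 \<le> y" by blast
  qed (auto intro!: continuous_intros)
  then show ?thesis using g by simp
qed

lemma half_gauss: "has_bochner_integral lborel (\<lambda>t. indicator {0<..} t * exp (- t\<^sup>2/2)) (sqrt (pi/2))"
proof -
  have h: "has_bochner_integral lborel (\<lambda>x. indicator {0..} x *\<^sub>R exp (- x\<^sup>2)) (sqrt pi / 2)"
    by (rule gaussian_moment_0)
  let ?c = "1 / sqrt 2 :: real"
  have c: "?c \<noteq> 0" by simp
  have "has_bochner_integral lborel (\<lambda>t. indicator {0..} (0 + ?c * t) *\<^sub>R exp (- (0 + ?c * t)\<^sup>2)) (sqrt pi / 2 /\<^sub>R \<bar>?c\<bar>)"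
    using h lborel_has_bochner_integral_real_affine_iff[OF c, of "\<lambda>x. indicator {0..} x *\<^sub>R exp (- x\<^sup>2)" "sqrt pi / 2" 0]
    by simp
  moreover have "(\<lambda>t. indicator {0..} (0 + ?c * t) *\<^sub>R exp (- (0 + ?c * t)\<^sup>2)) = (\<lambda>t. indicator {0..} t * exp (- t\<^sup>2/2))"
    by (auto simp: indicator_def power_divide zero_le_divide_iff)
  moreover have "sqrt pi / 2 /\<^sub>R \<bar>?c\<bar> = sqrt (pi/2)"
    by (simp add: real_sqrt_divide field_simps)
  ultimately have "has_bochner_integral lborel (\<lambda>t. indicator {0..} t * exp (- t\<^sup>2/2)) (sqrt (pi/2))"
    by simp
  moreover have "AE t in lborel. indicator {0..} t * exp (- t\<^sup>2/2) = indicator {0<..} t * exp (- t\<^sup>2/2 :: real)"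
    using AE_lborel_singleton[of 0] by eventually_elim (auto simp: indicator_def)
  ultimately show ?thesis by (subst has_bochner_integral_cong_AE[symmetric]) (auto simp del: has_bochner_integral_iff)
qed

lemma innerB:
  fixes w :: real assumes w: "0 < w"
  defines "k \<equiv> \<lambda>r. r * exp (- r\<^sup>2/2) / sqrt (r\<^sup>2 - w\<^sup>2)"
  shows "set_integrable lborel {w<..} k" "(LBINT r:{w<..}. k r) = sqrt (pi/2) * exp (- w\<^sup>2/2)"
proof -
  define g where "g t = sqrt (w\<^sup>2 + t\<^sup>2)" for t :: real
  define g' where "g' t = t / sqrt (w\<^sup>2 + t\<^sup>2)" for t :: real
  have gpos: "0 < w\<^sup>2 + t\<^sup>2" for t using w by (simp add: add_pos_nonneg)
  have deriv: "DERIV g t :> g' t" for t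
    unfolding g_def g'_def using gpos[of t]
    by (auto intro!: derivative_eq_intros simp: field_simps power2_eq_square)
  have kg: "k (g t) * g' t = exp (- w\<^sup>2/2) * exp (- t\<^sup>2/2)" if t: "0 < t" for t
  proof -
    have gsq: "(g t)\<^sup>2 = w\<^sup>2 + t\<^sup>2" unfolding g_def using gpos[of t] by simp
    have "sqrt ((g t)\<^sup>2 - w\<^sup>2) = t" unfolding gsq using t by simp
    moreover have "g t > 0" unfolding g_def using gpos[of t] by simp
    ultimately have "k (g t) * g' t = exp (- (g t)\<^sup>2/2)"
      unfolding k_def g'_def g_def[symmetric] using t by (simp add: field_simps)
    also have "\<dots> = exp (- w\<^sup>2/2) * exp (- t\<^sup>2/2)" unfolding gsq by (simp add: exp_add[symmetric] field_simps)
    finally show ?thesis .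
  qed
  have int0: "set_integrable lborel (einterval 0 \<infinity>) (\<lambda>t. exp (- w\<^sup>2/2) * exp (- t\<^sup>2/2))"
  proof -
    have "integrable lborel (\<lambda>t. indicator {0<..} t * exp (- t\<^sup>2/2) :: real)"
      using half_gauss by (simp add: has_bochner_integral_iff)
    then have "integrable lborel (\<lambda>t. exp (- w\<^sup>2/2) * (indicator {0<..} t * exp (- t\<^sup>2/2)) :: real)"
      by simp
    then show ?thesis unfolding set_integrable_def
      by (simp add: zero_ereal_def mult_ac)
  qed
  have val0: "(LBINT t=0..\<infinity>. exp (- w\<^sup>2/2) * exp (- t\<^sup>2/2)) = exp (- w\<^sup>2/2) * sqrt (pi/2)"
  proof -
    have "(LBINT t=0..\<infinity>. exp (- w\<^sup>2/2) * exp (- t\<^sup>2/2)) = exp (- w\<^sup>2/2) * (\<integral>t. indicator {0<..} t * exp (- t\<^sup>2/2) \<partial>lborel)"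
      by (simp add: interval_lebesgue_integral_def set_lebesgue_integral_def zero_ereal_def)
    also have "\<dots> = exp (- w\<^sup>2/2) * sqrt (pi/2)"
      using half_gauss by (simp add: has_bochner_integral_iff)
    finally show ?thesis .
  qed
  have fg_int: "set_integrable lborel (einterval 0 \<infinity>) (\<lambda>t. k (g t) * g' t)"
  proof -
    have "set_integrable lborel (einterval 0 \<infinity>) (\<lambda>t. k (g t) * g' t) = set_integrable lborel (einterval 0 \<infinity>) (\<lambda>t. exp (- w\<^sup>2/2) * exp (- t\<^sup>2/2))"
      by (rule set_integrable_cong) (auto simp: kg einterval_iff zero_ereal_def)
    with int0 show ?thesis by simp
  qed
  have contk: "isCont k (g t)" if t: "0 < t" for t
  proof -
    have "(g t)\<^sup>2 - w\<^sup>2 > 0" unfolding g_def using gpos[of t] t by simp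
    then show ?thesis unfolding k_def by (auto intro!: continuous_intros)
  qed
  have A: "((ereal \<circ> g \<circ> real_of_ereal) \<longlongrightarrow> ereal w) (at_right 0)"
  proof -
    have "(g \<longlongrightarrow> g 0) (at_right 0)"
      unfolding g_def by (intro tendsto_intros)
    moreover have "g 0 = w" unfolding g_def using w by simp
    ultimately show ?thesis unfolding zero_ereal_def ereal_tendsto_simps o_assoc[symmetric]
      by (simp add: comp_def)
  qed
  have B: "((ereal \<circ> g \<circ> real_of_ereal) \<longlongrightarrow> \<infinity>) (at_left \<infinity>)"
  proof -
    have "filterlim g at_top at_top"
    proof (rule filterlim_at_top_mono[OF filterlim_ident])
      show "\<forall>\<^sub>F x in at_top. x \<le> g x" unfolding g_def
        by (intro always_eventually allI real_le_rsqrt) simp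
    qed
    then show ?thesis unfolding ereal_tendsto_simps o_assoc[symmetric]
      by (simp add: comp_def at_left_PInf filterlim_filtermap)
  qed
  have sub: "set_integrable lborel (einterval w \<infinity>) k \<and> (LBINT x=ereal w..\<infinity>. k x) = (LBINT x=0..\<infinity>. k (g x) * g' x)"
  proof -
    have c1: "isCont g' x" for x unfolding g'_def using gpos[of x] by (auto intro!: continuous_intros)
    have c2: "0 \<le> k (g x)" if "0 < x" for x
      unfolding k_def g_def using that by simp
    have c3: "0 \<le> g' x" if "0 \<le> x" for x unfolding g'_def using that by simp
    show ?thesis
      using interval_integral_substitution_nonneg[of 0 \<infinity> g g' k w \<infinity>, OF _ deriv _ _ _ _ A B fg_int]
        contk c1 c2 c3 by (auto simp: zero_ereal_def)
  qed
  show "set_integrable lborel {w<..} k" using sub by simp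
  have "(LBINT x=0..\<infinity>. k (g x) * g' x) = (LBINT t=0..\<infinity>. exp (- w\<^sup>2/2) * exp (- t\<^sup>2/2))"
    by (rule interval_integral_cong) (auto simp: kg einterval_iff zero_ereal_def)
  then show "(LBINT r:{w<..}. k r) = sqrt (pi/2) * exp (- w\<^sup>2/2)"
    using sub val0 by (simp add: interval_integral_Ioi mult.commute)
qed

lemma sqrt_one_minus: assumes "0 < r" shows "sqrt (1 - (w/r)\<^sup>2) = sqrt (r\<^sup>2 - w\<^sup>2) / r"
proof -
  have "1 - (w/r)\<^sup>2 = (r\<^sup>2 - w\<^sup>2) / r\<^sup>2" using assms by (simp add: field_simps power2_eq_square)
  then show ?thesis using assms by (simp add: real_sqrt_divide)
qed

lemma innerA:
  fixes a r :: real assumes a: "0 \<le> a" and ar: "a < r"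
  defines "f \<equiv> \<lambda>w. (w - a) * r / sqrt (r\<^sup>2 - w\<^sup>2)"
  shows "set_integrable lborel {a<..<r} f" "(LBINT w:{a<..<r}. f w) = r\<^sup>2 * gfun (a/r)"
proof -
  have r: "0 < r" using a ar by simp
  define F where "F w = - r * sqrt (r\<^sup>2 - w\<^sup>2) - a * r * arcsin (w/r)" for w
  have deriv: "DERIV F w :> f w" if w: "a < w" "w < r" for w
  proof -
    have w0: "0 < w" using w a by simp
    have pos: "0 < r\<^sup>2 - w\<^sup>2" using w w0 by (simp add: power_strict_mono)
    have wr: "-1 < w/r" "w/r < 1" using w w0 r by (auto simp: field_simps)
    have "DERIV F w :> - r * (inverse (sqrt (r\<^sup>2 - w\<^sup>2)) / 2 * (- (2 * w))) - a * r * (inverse (sqrt (1 - (w/r)\<^sup>2)) * (1/r))"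
    proof -
      have d1: "((\<lambda>w. arcsin (w/r)) has_real_derivative inverse (sqrt (1 - (w/r)\<^sup>2)) * (1/r)) (at w)"
        by (rule DERIV_chain2[of arcsin _ "\<lambda>w. w/r" w "1/r", OF DERIV_arcsin[OF wr]])
           (use r in \<open>auto intro!: derivative_eq_intros\<close>)
      have d2: "((\<lambda>w. sqrt (r\<^sup>2 - w\<^sup>2)) has_real_derivative inverse (sqrt (r\<^sup>2 - w\<^sup>2)) / 2 * (- (2 * w))) (at w)"
        using pos by (auto intro!: derivative_eq_intros)
      show ?thesis unfolding F_def
        by (rule derivative_eq_intros d1 d2 refl)+ simp
    qed
    moreover have "- r * (inverse (sqrt (r\<^sup>2 - w\<^sup>2)) / 2 * (- (2 * w))) - a * r * (inverse (sqrt (1 - (w/r)\<^sup>2)) * (1/r)) = f w"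
      unfolding sqrt_one_minus[OF r] f_def using pos r by (simp add: field_simps)
    ultimately show ?thesis by simp
  qed
  have contf: "isCont f w" if w: "a < w" "w < r" for w
  proof -
    have w0: "0 < w" using w a by simp
    have pos: "0 < r\<^sup>2 - w\<^sup>2" using w w0 by (simp add: power_strict_mono)
    show ?thesis unfolding f_def using pos by (auto intro!: continuous_intros)
  qed
  have nonneg: "AE w in lborel. ereal a < ereal w \<longrightarrow> ereal w < ereal r \<longrightarrow> 0 \<le> f w"
  proof (rule AE_I2, intro impI)
    fix w assume "ereal a < ereal w" "ereal w < ereal r"
    then have w: "a < w" "w < r" by auto
    then have "w\<^sup>2 \<le> r\<^sup>2" using a by (intro power_mono) auto
    then show "0 \<le> f w" unfolding f_def using w r by (intro divide_nonneg_nonneg mult_nonneg_nonneg) auto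
  qed
  have contF: "continuous_on {a..r} F"
  proof -
    have b: "\<forall>x\<in>{a..r}. - 1 \<le> x / r \<and> x / r \<le> 1" using a r by (auto simp: field_simps)
    have c1: "continuous_on {a..r} (\<lambda>x. arcsin (x / r))"
      by (rule continuous_on_arcsin[OF _ b]) (use r in \<open>intro continuous_intros\<close>; auto)
    have c2: "continuous_on {a..r} (\<lambda>x. sqrt (r\<^sup>2 - x\<^sup>2))"
      by (intro continuous_intros)
    show ?thesis unfolding F_def
      by (intro continuous_on_diff continuous_on_mult continuous_on_const c1 c2)
  qed
  have A: "((F \<circ> real_of_ereal) \<longlongrightarrow> F a) (at_right (ereal a))"
    unfolding ereal_tendsto_simps using continuous_on_Icc_at_rightD[OF contF ar] .
  have B: "((F \<circ> real_of_ereal) \<longlongrightarrow> F r) (at_left (ereal r))"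
    unfolding ereal_tendsto_simps using continuous_on_Icc_at_leftD[OF contF ar] .
  have ftc: "set_integrable lborel (einterval a r) f" "(LBINT x=ereal a..ereal r. f x) = F r - F a"
  proof -
    have d': "\<And>x. ereal a < ereal x \<Longrightarrow> ereal x < ereal r \<Longrightarrow> DERIV F x :> f x" using deriv by simp
    have c': "\<And>x. ereal a < ereal x \<Longrightarrow> ereal x < ereal r \<Longrightarrow> isCont f x" using contf by simp
    have ar': "ereal a < ereal r" using ar by simp
    show "set_integrable lborel (einterval a r) f" "(LBINT x=ereal a..ereal r. f x) = F r - F a"
      using interval_integral_FTC_nonneg[OF ar' d' c' nonneg A B] by simp_all
  qed
  show "set_integrable lborel {a<..<r} f" using ftc by simp
  have val: "F r - F a = r\<^sup>2 * gfun (a/r)"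
  proof -
    have ar1: "-1 \<le> a/r" "a/r \<le> 1" using a ar r by (auto simp: field_simps)
    have "F r - F a = r * sqrt (r\<^sup>2 - a\<^sup>2) - a * r * (pi/2 - arcsin (a/r))"
      unfolding F_def using r by (simp add: algebra_simps)
    also have "\<dots> = r * sqrt (r\<^sup>2 - a\<^sup>2) - a * r * arccos (a/r)"
      using arccos_arcsin_eq[OF ar1] by simp
    also have "\<dots> = r\<^sup>2 * gfun (a/r)"
      unfolding gfun_def sin_arccos[OF ar1] sqrt_one_minus[OF r] using r
      by (simp add: field_simps power2_eq_square)
    finally show ?thesis .
  qed
  show "(LBINT w:{a<..<r}. f w) = r\<^sup>2 * gfun (a/r)"
    using ftc val ar by (simp add: interval_integral_Ioo)
qed

lemma nn_set_integral:
  fixes f :: "real \<Rightarrow> real"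
  assumes "set_integrable lborel S f" "\<And>x. x \<in> S \<Longrightarrow> 0 \<le> f x"
  shows "(\<integral>\<^sup>+x. ennreal (indicator S x * f x) \<partial>lborel) = ennreal (LBINT x:S. f x)"
proof -
  have "integrable lborel (\<lambda>x. indicator S x * f x)" using assms(1) unfolding set_integrable_def by simp
  moreover have "AE x in lborel. 0 \<le> indicator S x * f x" using assms(2) by (auto simp: indicator_def)
  ultimately show ?thesis unfolding set_lebesgue_integral_def
    by (subst nn_integral_eq_integral) auto
qed

lemma Tonelli_id:
  fixes a :: real assumes a: "0 \<le> a"
  shows "(\<integral>\<^sup>+r. ennreal (indicator {a<..} r * (r\<^sup>2 * gfun (a/r) * exp (- r\<^sup>2/2))) \<partial>lborel)
       = (\<integral>\<^sup>+w. ennreal (indicator {a<..} w * ((w - a) * sqrt (pi/2) * exp (- w\<^sup>2/2))) \<partial>lborel)"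
proof -
  define h where "h w r = (if a < w \<and> w < r then (w - a) * r * exp (- r\<^sup>2/2) / sqrt (r\<^sup>2 - w\<^sup>2) else 0)" for w r :: real
  have meas: "(\<lambda>(w,r). ennreal (h w r)) \<in> borel_measurable (lborel \<Otimes>\<^sub>M lborel)"
    unfolding h_def by measurable
  have in_r: "(\<integral>\<^sup>+w. ennreal (h w r) \<partial>lborel) = ennreal (indicator {a<..} r * (r\<^sup>2 * gfun (a/r) * exp (- r\<^sup>2/2)))" for r
  proof (cases "a < r")
    case False
    then have "h w r = 0" for w unfolding h_def by auto
    then show ?thesis using False by simp
  next
    case True
    define f where "f w = (w - a) * r / sqrt (r\<^sup>2 - w\<^sup>2)" for w
    have fi: "set_integrable lborel {a<..<r} f" and fv: "(LBINT w:{a<..<r}. f w) = r\<^sup>2 * gfun (a/r)"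
      using innerA[OF a True] unfolding f_def by auto
    have "h w r = indicator {a<..<r} w * (exp (- r\<^sup>2/2) * f w)" for w
      unfolding h_def f_def by (auto simp: indicator_def)
    then have "(\<integral>\<^sup>+w. ennreal (h w r) \<partial>lborel) = (\<integral>\<^sup>+w. ennreal (indicator {a<..<r} w * (exp (- r\<^sup>2/2) * f w)) \<partial>lborel)"
      by simp
    also have "\<dots> = ennreal (LBINT w:{a<..<r}. exp (- r\<^sup>2/2) * f w)"
    proof (rule nn_set_integral)
      show "set_integrable lborel {a<..<r} (\<lambda>w. exp (- r\<^sup>2/2) * f w)"
        using fi by (rule set_integrable_mult_right)
      fix w assume w: "w \<in> {a<..<r}"
      then have "w\<^sup>2 \<le> r\<^sup>2" using a by (intro power_mono) auto
      then show "0 \<le> exp (- r\<^sup>2/2) * f w" unfolding f_def using w a by (auto intro!: divide_nonneg_nonneg mult_nonneg_nonneg)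
    qed
    also have "(LBINT w:{a<..<r}. exp (- r\<^sup>2/2) * f w) = exp (- r\<^sup>2/2) * (r\<^sup>2 * gfun (a/r))"
      using fv by (simp add: set_integral_mult_right)
    finally show ?thesis using True by (simp add: mult_ac)
  qed
  have in_w: "(\<integral>\<^sup>+r. ennreal (h w r) \<partial>lborel) = ennreal (indicator {a<..} w * ((w - a) * sqrt (pi/2) * exp (- w\<^sup>2/2)))" for w
  proof (cases "a < w")
    case False
    then have "h w r = 0" for r unfolding h_def by auto
    then show ?thesis using False by simp
  next
    case True
    then have w0: "0 < w" using a by simp
    define k where "k r = r * exp (- r\<^sup>2/2) / sqrt (r\<^sup>2 - w\<^sup>2)" for r
    have ki: "set_integrable lborel {w<..} k" and kv: "(LBINT r:{w<..}. k r) = sqrt (pi/2) * exp (- w\<^sup>2/2)"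
      using innerB[OF w0] unfolding k_def by auto
    have "h w r = indicator {w<..} r * ((w - a) * k r)" for r
      unfolding h_def k_def using True by (auto simp: indicator_def)
    then have "(\<integral>\<^sup>+r. ennreal (h w r) \<partial>lborel) = (\<integral>\<^sup>+r. ennreal (indicator {w<..} r * ((w - a) * k r)) \<partial>lborel)"
      by simp
    also have "\<dots> = ennreal (LBINT r:{w<..}. (w - a) * k r)"
    proof (rule nn_set_integral)
      show "set_integrable lborel {w<..} (\<lambda>r. (w - a) * k r)"
        using ki by (rule set_integrable_mult_right)
      fix r assume r: "r \<in> {w<..}"
      then have "w\<^sup>2 \<le> r\<^sup>2" using w0 by (intro power_mono) auto
      then show "0 \<le> (w - a) * k r" unfolding k_def using r w0 True by (auto intro!: divide_nonneg_nonneg mult_nonneg_nonneg)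
    qed
    also have "(LBINT r:{w<..}. (w - a) * k r) = (w - a) * (sqrt (pi/2) * exp (- w\<^sup>2/2))"
      using kv by (simp add: set_integral_mult_right)
    finally show ?thesis using True by (simp add: mult_ac)
  qed
  have "(\<integral>\<^sup>+r. (\<integral>\<^sup>+w. ennreal (h w r) \<partial>lborel) \<partial>lborel) = (\<integral>\<^sup>+w. (\<integral>\<^sup>+r. ennreal (h w r) \<partial>lborel) \<partial>lborel)"
    by (rule lborel_pair.Fubini'[OF meas])
  then show ?thesis unfolding in_r in_w .
qed

definition Psi :: "real \<Rightarrow> real" where
  "Psi a = (LBINT w:{a<..}. (w - a) * std_normal_density w)"

lemma int_wa: "integrable lborel (\<lambda>w. (w - a) * std_normal_density w)"
proof -
  have "integrable lborel (\<lambda>w. std_normal_density w * w ^ 1 - a * std_normal_density w)"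
    using integrable_std_normal_moment[of 1] integrable_normal_density[of 0 1] by auto
  then show ?thesis by (simp add: algebra_simps)
qed

lemma setint_wa: "set_integrable lborel {a<..} (\<lambda>w. (w - a) * std_normal_density w)"
  unfolding set_integrable_def using integrable_mult_indicator[OF _ int_wa, of "{a<..}"] by simp

lemma Psi_nonneg: "0 \<le> Psi a"
  unfolding Psi_def set_lebesgue_integral_def
  by (rule Bochner_Integration.integral_nonneg) (auto simp: indicator_def)

lemma sqrt_pi_half: "sqrt (pi/2) * exp (- w\<^sup>2/2) = pi * std_normal_density w"
proof -
  have "sqrt (pi/2) * sqrt (2*pi) = pi"
    by (simp add: real_sqrt_mult[symmetric])
  then have "sqrt (pi/2) = pi / sqrt (2*pi)" by (simp add: field_simps)
  then show ?thesis unfolding std_normal_density_def by simp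
qed

lemma I_formula:
  fixes a :: real assumes a: "0 \<le> a"
  shows "(LBINT r:{a..}. r\<^sup>2 * exp (- (r\<^sup>2) / 2) * gfun (a / r)) = pi * Psi a"
proof -
  define G where "G r = indicator {a<..} r * (r\<^sup>2 * gfun (a/r) * exp (- r\<^sup>2/2))" for r
  have rhs: "(\<integral>\<^sup>+w. ennreal (indicator {a<..} w * ((w - a) * sqrt (pi/2) * exp (- w\<^sup>2/2))) \<partial>lborel) = ennreal (pi * Psi a)"
  proof -
    have eqf: "\<And>w. indicator {a<..} w * ((w - a) * sqrt (pi/2) * exp (- w\<^sup>2/2)) = indicator {a<..} w * (pi * ((w - a) * std_normal_density w))"
      by (auto simp: sqrt_pi_half[symmetric] indicator_def)
    have "(\<integral>\<^sup>+w. ennreal (indicator {a<..} w * ((w - a) * sqrt (pi/2) * exp (- w\<^sup>2/2))) \<partial>lborel)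
       = (\<integral>\<^sup>+w. ennreal (indicator {a<..} w * (pi * ((w - a) * std_normal_density w))) \<partial>lborel)" unfolding eqf ..
    also have "\<dots> = ennreal (LBINT w:{a<..}. pi * ((w - a) * std_normal_density w))"
      by (rule nn_set_integral) (auto intro!: set_integrable_mult_right setint_wa mult_nonneg_nonneg)
    also have "(LBINT w:{a<..}. pi * ((w - a) * std_normal_density w)) = pi * Psi a"
      unfolding Psi_def by (simp add: set_integral_mult_right)
    finally show ?thesis .
  qed
  have Gm: "G \<in> borel_measurable borel"
  proof -
    have "continuous_on {a<..} (\<lambda>r. r\<^sup>2 * gfun (a/r) * exp (- r\<^sup>2/2))"
    proof -
      have b: "\<forall>x\<in>{a<..}. - 1 \<le> a / x \<and> a / x \<le> 1" using a by (auto simp: field_simps)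
      have c: "continuous_on {a<..} (\<lambda>x. a / x)" using a by (intro continuous_intros) auto
      have c1: "continuous_on {a<..} (\<lambda>x. arccos (a / x))" by (rule continuous_on_arccos[OF c b])
      show ?thesis unfolding gfun_def
        by (intro continuous_intros c1 c; use a b in auto)
    qed
    from borel_measurable_continuous_on_indicator[of "{a<..}", OF _ this]
    show ?thesis unfolding G_def[abs_def] by simp
  qed
  have Gnn: "0 \<le> G r" for r
  proof (cases "a < r")
    case True
    then have "0 \<le> a/r" "a/r \<le> 1" using a by (auto simp: field_simps)
    then show ?thesis unfolding G_def using True by (auto intro!: mult_nonneg_nonneg gfun_nonneg)
  qed (simp add: G_def)
  have nnG: "(\<integral>\<^sup>+r. ennreal (G r) \<partial>lborel) = ennreal (pi * Psi a)"
    unfolding G_def Tonelli_id[OF a] rhs ..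
  have Gi: "integrable lborel G"
  proof (rule integrableI_nonneg)
    show "G \<in> borel_measurable lborel" using Gm by (simp add: measurable_lborel1)
  qed (use Gnn nnG in auto)
  have "ennreal (integral\<^sup>L lborel G) = ennreal (pi * Psi a)"
    using nnG nn_integral_eq_integral[OF Gi] Gnn by simp
  moreover have "0 \<le> integral\<^sup>L lborel G" using Gnn by simp
  moreover have "0 \<le> pi * Psi a"
    using Psi_nonneg by simp
  ultimately have IG: "integral\<^sup>L lborel G = pi * Psi a" by simp
  have "(LBINT r:{a..}. r\<^sup>2 * exp (- (r\<^sup>2) / 2) * gfun (a / r)) = (LBINT r:{a<..}. r\<^sup>2 * exp (- (r\<^sup>2) / 2) * gfun (a / r))"
    by (rule set_integral_discrete_difference[where X="{a}"]) auto
  also have "\<dots> = integral\<^sup>L lborel G"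
    unfolding set_lebesgue_integral_def G_def by (simp add: mult_ac)
  finally show ?thesis using IG by simp
qed


lemma std_even: "std_normal_density (- x) = std_normal_density x"
  unfolding std_normal_density_def by simp

lemma absZ: assumes a: "0 \<le> a"
  shows "(\<integral>z. \<bar>a + z\<bar> * std_normal_density z \<partial>lborel) = a + 2 * Psi a"
proof -
  define f where "f z = indicator {..< -a} z * ((- a - z) * std_normal_density z)" for z :: real
  have i1: "integrable lborel (\<lambda>z. (a + z) * std_normal_density z)"
    using int_wa[of "-a"] by (simp add: add.commute)
  have i2: "integrable lborel f"
  proof -
    have "integrable lborel (\<lambda>z. - ((z - (-a)) * std_normal_density z))"
      using int_wa[of "-a"] by simp
    from integrable_mult_indicator[OF _ this, of "{..< -a}"]
    have "integrable lborel (\<lambda>z. indicator {..< -a} z *\<^sub>R (- ((z - (-a)) * std_normal_density z)))" by simp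
    moreover have "(\<lambda>z. indicator {..< -a} z *\<^sub>R (- ((z - (-a)) * std_normal_density z))) = f"
      unfolding f_def by (rule ext) (simp add: algebra_simps)
    ultimately show ?thesis by metis
  qed
  have pw: "\<bar>a + z\<bar> * std_normal_density z = (a + z) * std_normal_density z + 2 * f z" for z
    unfolding f_def by (auto simp: indicator_def abs_if algebra_simps)
  have e1: "(\<integral>z. (a + z) * std_normal_density z \<partial>lborel) = a"
  proof -
    have "(\<integral>z. (a + z) * std_normal_density z \<partial>lborel) = (\<integral>z. a * std_normal_density z + std_normal_density z * z ^ 1 \<partial>lborel)"
      by (simp add: algebra_simps)
    also have "\<dots> = a * 1 + 0"
      using integrable_std_normal_moment[of 1] integral_std_normal_moment_odd[of 0]
      by (subst Bochner_Integration.integral_add) auto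
    finally show ?thesis by simp
  qed
  have e2: "(\<integral>z. f z \<partial>lborel) = Psi a"
  proof -
    have "(\<integral>z. f z \<partial>lborel) = \<bar>-1\<bar> *\<^sub>R (\<integral>z. f (0 + (-1) * z) \<partial>lborel)"
      by (rule lborel_integral_real_affine) simp
    also have "(\<lambda>z. f (0 + (-1) * z)) = (\<lambda>z. indicator {a<..} z *\<^sub>R ((z - a) * std_normal_density z))"
      unfolding f_def by (auto simp: indicator_def std_even)
    finally show ?thesis unfolding Psi_def set_lebesgue_integral_def by simp
  qed
  have "(\<integral>z. \<bar>a + z\<bar> * std_normal_density z \<partial>lborel) = (\<integral>z. (a + z) * std_normal_density z + 2 * f z \<partial>lborel)"
    unfolding pw ..
  also have "\<dots> = a + 2 * Psi a"
    using i1 i2 e1 e2 by (subst Bochner_Integration.integral_add) auto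
  finally show ?thesis .
qed

lemma E_abs_normal:
  assumes s: "0 < \<sigma>"
  shows "(\<integral>x. normal_density \<mu> \<sigma> x * \<bar>x\<bar> \<partial>lborel) = \<bar>\<mu>\<bar> + 2 * \<sigma> * Psi (\<bar>\<mu>\<bar> / \<sigma>)"
proof -
  define c where "c = (if 0 \<le> \<mu> then \<sigma> else - \<sigma>)"
  have c0: "c \<noteq> 0" and cabs: "\<bar>c\<bar> = \<sigma>" and csq: "c\<^sup>2 = \<sigma>\<^sup>2" using s by (auto simp: c_def)
  define a where "a = \<bar>\<mu>\<bar> / \<sigma>"
  have a0: "0 \<le> a" unfolding a_def using s by simp
  have "(\<integral>x. normal_density \<mu> \<sigma> x * \<bar>x\<bar> \<partial>lborel) = \<bar>c\<bar> *\<^sub>R (\<integral>z. normal_density \<mu> \<sigma> (\<mu> + c * z) * \<bar>\<mu> + c * z\<bar> \<partial>lborel)"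
    by (rule lborel_integral_real_affine[OF c0])
  also have "(\<lambda>z. normal_density \<mu> \<sigma> (\<mu> + c * z) * \<bar>\<mu> + c * z\<bar>) = (\<lambda>z. \<bar>a + z\<bar> * std_normal_density z)"
  proof
    fix z
    have n: "normal_density \<mu> \<sigma> (\<mu> + c * z) = std_normal_density z / \<sigma>"
      unfolding normal_density_def using s csq
      by (simp add: power_mult_distrib real_sqrt_mult field_simps)
    have m: "\<bar>\<mu> + c * z\<bar> = \<sigma> * \<bar>a + z\<bar>"
      unfolding a_def c_def using s by (auto simp: abs_if field_simps)
    show "normal_density \<mu> \<sigma> (\<mu> + c * z) * \<bar>\<mu> + c * z\<bar> = \<bar>a + z\<bar> * std_normal_density z"
      unfolding n m using s by simp
  qed
  finally show ?thesis using absZ[OF a0] cabs s unfolding a_def by (simp add: field_simps)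
qed

lemma upper_tail: assumes a: "0 \<le> a"
  shows "(LBINT u:{a<..}. u * std_normal_density u) = std_normal_density a"
proof -
  define F where "F u = - std_normal_density u" for u
  have d: "\<And>x. ereal a < ereal x \<Longrightarrow> ereal x < \<infinity> \<Longrightarrow> DERIV F x :> x * std_normal_density x"
    unfolding F_def std_normal_density_def
    by (auto intro!: derivative_eq_intros simp: field_simps power2_eq_square)
  have c: "\<And>x. ereal a < ereal x \<Longrightarrow> ereal x < \<infinity> \<Longrightarrow> isCont (\<lambda>x. x * std_normal_density x) x"
    unfolding std_normal_density_def by (auto intro!: continuous_intros)
  have nn: "AE x in lborel. ereal a < ereal x \<longrightarrow> ereal x < \<infinity> \<longrightarrow> 0 \<le> x * std_normal_density x"
    using a by (auto intro!: AE_I2 mult_nonneg_nonneg)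
  have A: "((F \<circ> real_of_ereal) \<longlongrightarrow> F a) (at_right (ereal a))"
    unfolding ereal_tendsto_simps F_def std_normal_density_def
    by (intro tendsto_intros) auto
  have B: "((F \<circ> real_of_ereal) \<longlongrightarrow> 0) (at_left \<infinity>)"
    unfolding ereal_tendsto_simps F_def std_normal_density_def
    by real_asymp
  have "(LBINT x=ereal a..\<infinity>. x * std_normal_density x) = 0 - F a"
    using interval_integral_FTC_nonneg[OF _ d c nn A B] by simp
  then show ?thesis by (simp add: interval_integral_Ioi F_def)
qed

definition Qt :: "real \<Rightarrow> real" where "Qt a = (LBINT u:{a<..}. std_normal_density u)"

lemma Qt_bounds: "0 \<le> Qt a" "Qt a \<le> 1"
proof -
  show "0 \<le> Qt a" unfolding Qt_def set_lebesgue_integral_def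
    by (rule Bochner_Integration.integral_nonneg) (auto simp: indicator_def)
  have I: "integrable lborel (\<lambda>u. indicator {a<..} u *\<^sub>R std_normal_density u)"
    by (rule integrable_mult_indicator) auto
  have "Qt a \<le> (\<integral>u. std_normal_density u \<partial>lborel)"
    unfolding Qt_def set_lebesgue_integral_def
    by (rule integral_mono[OF I]) (auto simp: indicator_def)
  then show "Qt a \<le> 1" by simp
qed

lemma Psi_split: assumes a: "0 \<le> a" shows "Psi a = std_normal_density a - a * Qt a"
proof -
  have i1: "set_integrable lborel {a<..} (\<lambda>u. u * std_normal_density u)"
    unfolding set_integrable_def
    using integrable_mult_indicator[OF _ integrable_std_normal_moment[of 1], of "{a<..}"] by (simp add: mult_ac)
  have i2: "set_integrable lborel {a<..} (\<lambda>u. a * std_normal_density u)"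
  proof -
    have "set_integrable lborel {a<..} std_normal_density"
      unfolding set_integrable_def by (rule integrable_mult_indicator) auto
    then show ?thesis by (rule set_integrable_mult_right)
  qed
  have "Psi a = (LBINT u:{a<..}. u * std_normal_density u - a * std_normal_density u)"
    unfolding Psi_def by (simp add: algebra_simps)
  also have "\<dots> = (LBINT u:{a<..}. u * std_normal_density u) - (LBINT u:{a<..}. a * std_normal_density u)"
    by (rule set_integral_diff(2)[OF i1 i2])
  also have "\<dots> = std_normal_density a - a * Qt a"
    unfolding upper_tail[OF a] Qt_def by (simp add: set_integral_mult_right)
  finally show ?thesis .
qed

lemma Psi_le: "0 \<le> a \<Longrightarrow> Psi a \<le> std_normal_density a"
  using Psi_split Qt_bounds[of a] by (simp add: mult_nonneg_nonneg)

lemma Psi_ge: "0 \<le> a \<Longrightarrow> std_normal_density a - a \<le> Psi a"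
  using Psi_split Qt_bounds[of a] by (simp add: mult_left_le)

lemma rho_formula: assumes "0 < s" "0 \<le> d" shows "rho_tilde d s = 2 * s * Psi (d / s)"
proof -
  have e: "(\<lambda>r. r\<^sup>2 * exp (- (r\<^sup>2) / 2) * gfun (d / (r * s))) = (\<lambda>r. r\<^sup>2 * exp (- (r\<^sup>2) / 2) * gfun (d / s / r))"
    by (simp add: mult.commute)
  have "0 \<le> d / s" using assms by simp
  from I_formula[OF this]
  show ?thesis unfolding rho_tilde_def e by simp
qed


lemma (in prob_space) gauss_D:
  assumes s: "0 < s" and X: "distributed M lborel X (gauss2 t s)"
  shows "distributed M lborel (\<lambda>\<omega>. snd (X \<omega>) - fst (X \<omega>)) (normal_density (snd t - fst t) (sqrt (s\<^sup>2 + s\<^sup>2)))"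
proof -
  define f where "f x = ennreal (normal_density (fst t) s x)" for x
  define g where "g y = ennreal (normal_density (snd t) s y)" for y
  have fm[measurable]: "f \<in> borel_measurable lborel" unfolding f_def by simp
  have gm[measurable]: "g \<in> borel_measurable lborel" unfolding g_def by simp
  have eqX: "(\<lambda>\<omega>. (fst (X \<omega>), snd (X \<omega>))) = X" by simp
  have eqd: "gauss2 t s = (\<lambda>(x,y). f x * g y)"
    unfolding gauss2_def f_def g_def by (auto simp: ennreal_mult fun_eq_iff)
  have J: "distributed M (lborel \<Otimes>\<^sub>M lborel) (\<lambda>\<omega>. (fst (X \<omega>), snd (X \<omega>))) (\<lambda>(x,y). f x * g y)"
    using X unfolding eqX eqd lborel_prod .
  have intf: "(\<integral>\<^sup>+x. f x \<partial>lborel) = 1"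
  proof -
    interpret P: prob_space "density lborel f" unfolding f_def using s by (rule prob_space_normal_density)
    show ?thesis using P.emeasure_space_1 by (simp add: emeasure_density)
  qed
  have intg: "(\<integral>\<^sup>+x. g x \<partial>lborel) = 1"
  proof -
    interpret P: prob_space "density lborel g" unfolding g_def using s by (rule prob_space_normal_density)
    show ?thesis using P.emeasure_space_1 by (simp add: emeasure_density)
  qed
  have sf: "sigma_finite_measure lborel" by (rule lborel.sigma_finite_measure_axioms)
  have X1': "distributed M lborel (\<lambda>\<omega>. fst (X \<omega>)) (\<lambda>x. \<integral>\<^sup>+y. (\<lambda>(x,y). f x * g y) (x, y) \<partial>lborel)"
    by (rule distr_marginal1[OF sf sf J])
  have X1: "distributed M lborel (\<lambda>\<omega>. fst (X \<omega>)) f"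
    using X1' by (simp add: nn_integral_cmult intg)
  have X2': "distributed M lborel (\<lambda>\<omega>. snd (X \<omega>)) (\<lambda>y. \<integral>\<^sup>+x. (\<lambda>(x,y). f x * g y) (x, y) \<partial>lborel)"
    by (rule distr_marginal2[OF sf sf J])
  have X2: "distributed M lborel (\<lambda>\<omega>. snd (X \<omega>)) g"
    using X2' by (simp add: nn_integral_multc intf)
  have sfg: "sigma_finite_measure (density lborel g)"
  proof -
    interpret P: prob_space "density lborel g" unfolding g_def using s by (rule prob_space_normal_density)
    show ?thesis by unfold_locales
  qed
  have ind: "indep_var borel (\<lambda>\<omega>. fst (X \<omega>)) borel (\<lambda>\<omega>. snd (X \<omega>))"
  proof (subst indep_var_distribution_eq, intro conjI)
    show "random_variable borel (\<lambda>\<omega>. fst (X \<omega>))"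
      using distributed_measurable[OF X1] by simp
    show "random_variable borel (\<lambda>\<omega>. snd (X \<omega>))"
      using distributed_measurable[OF X2] by simp
    have "distr M borel (\<lambda>\<omega>. fst (X \<omega>)) \<Otimes>\<^sub>M distr M borel (\<lambda>\<omega>. snd (X \<omega>))
        = distr M lborel (\<lambda>\<omega>. fst (X \<omega>)) \<Otimes>\<^sub>M distr M lborel (\<lambda>\<omega>. snd (X \<omega>))"
      by (intro arg_cong2[where f=pair_measure] distr_cong) auto
    also have "\<dots> = density lborel f \<Otimes>\<^sub>M density lborel g"
      using distributed_distr_eq_density[OF X1] distributed_distr_eq_density[OF X2] by simp
    also have "\<dots> = density (lborel \<Otimes>\<^sub>M lborel) (\<lambda>(x,y). f x * g y)"
      by (rule pair_measure_density[OF fm gm sf sfg])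
    also have "\<dots> = distr M (lborel \<Otimes>\<^sub>M lborel) (\<lambda>\<omega>. (fst (X \<omega>), snd (X \<omega>)))"
      using distributed_distr_eq_density[OF J] by simp
    also have "\<dots> = distr M (borel \<Otimes>\<^sub>M borel) (\<lambda>\<omega>. (fst (X \<omega>), snd (X \<omega>)))"
      by (intro distr_cong) auto
    finally show "distr M borel (\<lambda>\<omega>. fst (X \<omega>)) \<Otimes>\<^sub>M distr M borel (\<lambda>\<omega>. snd (X \<omega>)) =
      distr M (borel \<Otimes>\<^sub>M borel) (\<lambda>\<omega>. (fst (X \<omega>), snd (X \<omega>)))" .
  qed
  have D1: "distributed M lborel (\<lambda>\<omega>. fst (X \<omega>) - snd (X \<omega>)) (normal_density (fst t - snd t) (sqrt (s\<^sup>2 + s\<^sup>2)))"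
    using diff_indep_normal[OF ind s s X1[unfolded f_def] X2[unfolded g_def]] .
  have sp: "0 < sqrt (s\<^sup>2 + s\<^sup>2)" using s by simp
  have "distributed M lborel (\<lambda>\<omega>. 0 + (-1) * (fst (X \<omega>) - snd (X \<omega>))) (normal_density (0 + (-1) * (fst t - snd t)) (\<bar>-1\<bar> * sqrt (s\<^sup>2 + s\<^sup>2)))"
    by (rule normal_density_affine[OF D1 sp]) simp
  then show ?thesis by simp
qed


lemma gfun0: "gfun 0 = 1" unfolding gfun_def by simp

lemma Psi0: "Psi 0 = std_normal_density 0" using Psi_split[of 0] by simp

lemma Psi0_pos: "0 < Psi 0" unfolding Psi0 std_normal_density_def by simp

lemma K_val: "(LBINT r:{0..}. r\<^sup>2 * exp (- (r\<^sup>2) / 2)) = pi * Psi 0"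
  using I_formula[of 0] by (simp add: gfun0)

lemma Psi_lim: assumes d: "0 < d" shows "((\<lambda>s. Psi (d / s)) \<longlongrightarrow> Psi 0) at_top"
proof (rule tendsto_sandwich[of "\<lambda>s. std_normal_density (d/s) - d/s" _ _ "\<lambda>s. std_normal_density (d/s)"])
  have ev: "eventually (\<lambda>s::real. 0 < s) at_top" by (rule eventually_gt_at_top)
  show "eventually (\<lambda>s. std_normal_density (d/s) - d/s \<le> Psi (d/s)) at_top"
    using ev by eventually_elim (rule Psi_ge, use d in simp)
  show "eventually (\<lambda>s. Psi (d/s) \<le> std_normal_density (d/s)) at_top"
    using ev by eventually_elim (rule Psi_le, use d in simp)
  have p: "Psi 0 = 1 / sqrt (2*pi)" unfolding Psi0 std_normal_density_def by simp
  have l0: "((\<lambda>s. d/s) \<longlongrightarrow> 0) at_top" using d by real_asymp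
  have l2': "((\<lambda>s. 1 / sqrt (2*pi) * exp (- (d/s)\<^sup>2/2)) \<longlongrightarrow> 1 / sqrt (2*pi) * exp (- 0\<^sup>2/2)) at_top"
    by (intro tendsto_intros l0) auto
  have l2: "((\<lambda>s. 1 / sqrt (2*pi) * exp (- (d/s)\<^sup>2/2)) \<longlongrightarrow> 1 / sqrt (2*pi)) at_top"
    using l2' by simp
  have l1: "((\<lambda>s. 1 / sqrt (2*pi) * exp (- (d/s)\<^sup>2/2) - d/s) \<longlongrightarrow> 1 / sqrt (2*pi) - 0) at_top"
    by (intro tendsto_intros l0 l2)
  show "((\<lambda>s. std_normal_density (d/s) - d/s) \<longlongrightarrow> Psi 0) at_top"
    unfolding p std_normal_density_def using l1 by simp
  show "((\<lambda>s. std_normal_density (d/s)) \<longlongrightarrow> Psi 0) at_top"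
    unfolding p std_normal_density_def using l2 .
qed

lemma part_a: assumes d: "0 < d"
  shows "(\<lambda>s. rho_tilde d s) \<sim>[at_top] (\<lambda>s. s * (2 / pi) * (LBINT r:{0..}. r\<^sup>2 * exp (- (r\<^sup>2) / 2)))"
proof (rule asymp_equivI')
  have ev: "eventually (\<lambda>s::real. 0 < s) at_top" by (rule eventually_gt_at_top)
  have "eventually (\<lambda>s. Psi (d/s) / Psi 0 = rho_tilde d s / (s * (2 / pi) * (LBINT r:{0..}. r\<^sup>2 * exp (- (r\<^sup>2) / 2)))) at_top"
    using ev
  proof eventually_elim
    case (elim s)
    then show ?case unfolding K_val rho_formula[OF elim less_imp_le[OF d]]
      using Psi0_pos by (simp add: field_simps)
  qed
  moreover have "((\<lambda>s. Psi (d/s) / Psi 0) \<longlongrightarrow> Psi 0 / Psi 0) at_top"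
    by (intro tendsto_divide Psi_lim d tendsto_const) (use Psi0_pos in simp)
  ultimately show "((\<lambda>s. rho_tilde d s / (s * (2 / pi) * (LBINT r:{0..}. r\<^sup>2 * exp (- (r\<^sup>2) / 2)))) \<longlongrightarrow> 1) at_top"
    using Psi0_pos by (simp add: tendsto_cong)
qed

lemma h_small: assumes d: "0 < d"
  shows "(\<lambda>s. s * exp (- (d/s)\<^sup>2/2)) \<in> o[at_right (0::real)](\<lambda>s. s ^ k)"
proof (rule smalloI_tendsto)
  have ev: "eventually (\<lambda>s. 0 < s \<and> s \<le> 1) (at_right (0::real))"
    by (simp add: eventually_at_right_field) (rule exI[of _ 1], auto)
  show "eventually (\<lambda>s. s ^ k \<noteq> 0) (at_right (0::real))"
    using ev by eventually_elim auto
  define u where "u s = (d/s)\<^sup>2/2" for s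
  have ul: "filterlim u at_top (at_right 0)" unfolding u_def using d by real_asymp
  have lim: "((\<lambda>s. (2/d\<^sup>2)^k * ((u s) ^ k / exp (u s))) \<longlongrightarrow> (2/d\<^sup>2)^k * 0) (at_right 0)"
    by (intro tendsto_mult tendsto_const filterlim_compose[OF tendsto_power_div_exp_0 ul])
  show "((\<lambda>s. s * exp (- (d/s)\<^sup>2/2) / s ^ k) \<longlongrightarrow> 0) (at_right 0)"
  proof (rule tendsto_sandwich[of "\<lambda>_. 0" _ _ "\<lambda>s. (2/d\<^sup>2)^k * ((u s) ^ k / exp (u s))"])
    show "eventually (\<lambda>s. 0 \<le> s * exp (- (d/s)\<^sup>2/2) / s ^ k) (at_right 0)"
      using ev by eventually_elim auto
    show "eventually (\<lambda>s. s * exp (- (d/s)\<^sup>2/2) / s ^ k \<le> (2/d\<^sup>2)^k * ((u s) ^ k / exp (u s))) (at_right 0)"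
      using ev
    proof eventually_elim
      case (elim s)
      then have s: "0 < s" "s \<le> 1" by auto
      have "s * s ^ (2*k) \<le> s ^ k"
      proof -
        have "s ^ (2*k+1) \<le> s ^ k" using s by (intro power_decreasing) auto
        then show ?thesis by (simp add: power_add)
      qed
      then have "s / s ^ k \<le> 1 / s ^ (2*k)" using s by (simp add: field_simps)
      moreover have B: "(2/d\<^sup>2)^k * (u s) ^ k = 1 / s ^ (2*k)"
      proof -
        have "(2/d\<^sup>2) * u s = 1 / s\<^sup>2" unfolding u_def using d s by (simp add: power_divide field_simps)
        then have "((2/d\<^sup>2) * u s)^k = (1 / s\<^sup>2)^k" by simp
        then show ?thesis by (simp add: power_mult_distrib power_mult power_divide)
      qed
      moreover have C: "exp (- (d/s)\<^sup>2/2) = 1 / exp (u s)" unfolding u_def by (simp add: exp_minus field_simps)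
      have "s * exp (- (d/s)\<^sup>2/2) / s ^ k = (s / s ^ k) * (1 / exp (u s))"
        unfolding C by simp
      moreover have "(2/d\<^sup>2)^k * ((u s) ^ k / exp (u s)) = (1 / s ^ (2*k)) * (1 / exp (u s))"
        unfolding B[symmetric] by simp
      moreover have "(s / s ^ k) * (1 / exp (u s)) \<le> (1 / s ^ (2*k)) * (1 / exp (u s))"
        using \<open>s / s ^ k \<le> 1 / s ^ (2*k)\<close> by (rule mult_right_mono) simp
      ultimately show ?case by simp
    qed
  qed (use lim in auto)
qed

lemma part_b: assumes d: "0 < d"
  shows "(\<lambda>s. rho_tilde d s) \<in> o[at_right (0::real)](\<lambda>s. s ^ k)"
proof (rule landau_o.big_small_trans[OF _ h_small[OF d]])
  have ev: "eventually (\<lambda>s. 0 < s) (at_right (0::real))"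
    by (simp add: eventually_at_right_field) (rule exI[of _ 1], auto)
  show "(\<lambda>s. rho_tilde d s) \<in> O[at_right 0](\<lambda>s. s * exp (- (d/s)\<^sup>2/2))"
  proof (rule bigoI[where c = 2])
    show "eventually (\<lambda>s. norm (rho_tilde d s) \<le> 2 * norm (s * exp (- (d/s)\<^sup>2/2))) (at_right 0)"
      using ev
    proof eventually_elim
      case (elim s)
      have a: "0 \<le> d/s" using d elim by simp
      have r: "rho_tilde d s = 2 * s * Psi (d/s)" by (rule rho_formula[OF elim less_imp_le[OF d]])
      have "Psi (d/s) \<le> std_normal_density (d/s)" by (rule Psi_le[OF a])
      also have "\<dots> \<le> exp (- (d/s)\<^sup>2/2)"
      proof -
        have "1 / sqrt (2*pi) \<le> 1" using pi_gt3 by (simp add: divide_le_eq real_le_rsqrt)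
        then show ?thesis unfolding std_normal_density_def
          by (intro mult_left_le_one_le) auto
      qed
      finally have "Psi (d/s) \<le> exp (- (d/s)\<^sup>2/2)" .
      then show ?case unfolding r using elim Psi_nonneg[of "d/s"] by (simp add: abs_mult)
    qed
  qed
qed


theorem mainTheorem8:
  fixes M :: "'w measure" and X :: "'w \<Rightarrow> real \<times> real"
  assumes "prob_space M"
    and "X \<in> borel_measurable M"
    and "integrable M (\<lambda>\<omega>. (norm (X \<omega>))\<^sup>2)"
  defines "t0 \<equiv> (LINT \<omega>|M. X \<omega>)"
  shows
    "(t0 \<in> Lline \<longrightarrow>
        (frechet_mean M X t0 \<longleftrightarrow> measure M {\<omega> \<in> space M. X \<omega> \<in> Lline} = 1))
   \<and> (t0 \<in> HPA \<longrightarrow>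
        (frechet_mean M X t0 \<longleftrightarrow> measure M {\<omega> \<in> space M. X \<omega> \<in> HPA \<union> Lline} = 1))
   \<and> (t0 \<in> HPB \<longrightarrow>
        (frechet_mean M X t0 \<longleftrightarrow> measure M {\<omega> \<in> space M. X \<omega> \<in> HPB \<union> Lline} = 1))
   \<and> (\<forall>s>0. distributed M lborel X (gauss2 t0 s) \<longrightarrow>
        (\<exists>mstar. frechet_mean M X mstar
           \<and> (\<forall>m'. frechet_mean M X m' \<longrightarrow> orbit m' = orbit mstar)
           \<and> (\<exists>c::real. mstar = t0 + c *\<^sub>R (1, -1))
           \<and> dQ t0 mstar = rho_tilde (infdist t0 Lline) s))
   \<and> (\<forall>x\<in>{0..1}. gfun x \<ge> 0)
   \<and> (\<forall>d>0. (\<lambda>s. rho_tilde d s) \<sim>[at_top]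
              (\<lambda>s. s * (2 / pi) * (LBINT r:{0..}. r\<^sup>2 * exp (- (r\<^sup>2) / 2))))
   \<and> (\<forall>d>0. \<forall>k::nat. (\<lambda>s. rho_tilde d s) \<in> o[at_right (0::real)](\<lambda>s. s ^ k))
   \<and> (\<exists>c. \<forall>s>0. rho_tilde 0 s = c * s)"
proof -
  interpret P: prob_space M by (rule assms(1))
  interpret F: fsetup M X by unfold_locales (use assms in auto)
  have t0e: "t0 = integral\<^sup>L M X" unfolding t0_def by simp
  have p1: "(t0 \<in> Lline \<longrightarrow>
        (frechet_mean M X t0 \<longleftrightarrow> measure M {\<omega> \<in> space M. X \<omega> \<in> Lline} = 1))
   \<and> (t0 \<in> HPA \<longrightarrow>
        (frechet_mean M X t0 \<longleftrightarrow> measure M {\<omega> \<in> space M. X \<omega> \<in> HPA \<union> Lline} = 1))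
   \<and> (t0 \<in> HPB \<longrightarrow>
        (frechet_mean M X t0 \<longleftrightarrow> measure M {\<omega> \<in> space M. X \<omega> \<in> HPB \<union> Lline} = 1))"
    unfolding t0e by (rule F.part1)
  have Deq: "F.D = (\<lambda>\<omega>. snd (X \<omega>) - fst (X \<omega>))" by (rule ext) (simp add: F.D_def)
  have p2: "\<forall>s>0. distributed M lborel X (gauss2 t0 s) \<longrightarrow>
        (\<exists>mstar. frechet_mean M X mstar
           \<and> (\<forall>m'. frechet_mean M X m' \<longrightarrow> orbit m' = orbit mstar)
           \<and> (\<exists>c::real. mstar = t0 + c *\<^sub>R (1, -1))
           \<and> dQ t0 mstar = rho_tilde (infdist t0 Lline) s)"
  proof (intro allI impI)
    fix s :: real assume s: "0 < s" and dist: "distributed M lborel X (gauss2 t0 s)"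
    define \<delta> where "\<delta> = snd t0 - fst t0"
    define \<sigma> where "\<sigma> = sqrt (s\<^sup>2 + s\<^sup>2)"
    have sig: "\<sigma> = sqrt 2 * s" unfolding \<sigma>_def using s by (simp add: real_sqrt_mult)
    have sigpos: "0 < \<sigma>" unfolding sig using s by simp
    have Dd: "distributed M lborel F.D (normal_density \<delta> \<sigma>)"
      unfolding Deq \<delta>_def \<sigma>_def by (rule P.gauss_D[OF s dist])
    have beta: "F.beta = \<bar>\<delta>\<bar> + 2 * \<sigma> * Psi (\<bar>\<delta>\<bar> / \<sigma>)"
    proof -
      have "F.beta = (\<integral>x. normal_density \<delta> \<sigma> x * \<bar>x\<bar> \<partial>lborel)"
        unfolding F.beta_def by (rule distributed_integral[OF Dd, symmetric]) auto
      then show ?thesis using E_abs_normal[OF sigpos] by simp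
    qed
    have al: "fst t0 + snd t0 = F.alpha" unfolding t0e by (rule F.t0_alpha)
    define mstar where "mstar = ((F.alpha - F.beta)/2, (F.alpha + F.beta)/2)"
    have b0: "0 \<le> F.beta" by (rule F.beta_nonneg)
    have fm: "frechet_mean M X mstar" unfolding F.FM mstar_def using b0 by (simp add: field_simps)
    have uniq: "orbit m' = orbit mstar" if "frechet_mean M X m'" for m'
    proof -
      have h: "fst m' + snd m' = F.alpha" "\<bar>snd m' - fst m'\<bar> = F.beta" using that unfolding F.FM by auto
      have orb: "orbit (a, b) = {(a, b), (b, a)}" for a b :: real
        unfolding orbit_def by (auto simp: UNIV_bool)
      show ?thesis
      proof (cases "snd m' - fst m' \<ge> 0")
        case True
        then have "m' = mstar" using h unfolding mstar_def by (cases m') (auto simp: field_simps)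
        then show ?thesis by simp
      next
        case False
        then have "m' = (snd mstar, fst mstar)" using h unfolding mstar_def by (cases m') (auto simp: field_simps)
        then show ?thesis unfolding mstar_def by (simp add: orb insert_commute)
      qed
    qed
    have cc: "\<exists>c::real. mstar = t0 + c *\<^sub>R (1, -1)"
    proof (rule exI[of _ "fst mstar - fst t0"])
      show "mstar = t0 + (fst mstar - fst t0) *\<^sub>R (1, -1)"
        using al unfolding mstar_def by (cases t0) (auto simp: field_simps)
    qed
    have dq: "dQ t0 mstar = rho_tilde (infdist t0 Lline) s"
    proof -
      have l: "fst t0 + snd t0 = fst mstar + snd mstar" using al unfolding mstar_def by (simp add: field_simps)
      have dm: "\<bar>snd mstar - fst mstar\<bar> = F.beta" unfolding mstar_def using b0 by (simp add: field_simps)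
      have "dQ t0 mstar = \<bar>\<bar>\<delta>\<bar> - F.beta\<bar> / sqrt 2"
        unfolding dQ_formula[OF l] dm \<delta>_def ..
      also have "\<dots> = 2 * \<sigma> * Psi (\<bar>\<delta>\<bar> / \<sigma>) / sqrt 2"
        unfolding beta using sigpos Psi_nonneg by simp
      also have "\<dots> = 2 * s * Psi (\<bar>\<delta>\<bar> / sqrt 2 / s)"
        unfolding sig by (simp add: divide_divide_eq_left mult.commute)
      also have "\<dots> = rho_tilde (\<bar>\<delta>\<bar> / sqrt 2) s"
        by (rule rho_formula[symmetric]) (use s in auto)
      also have "\<bar>\<delta>\<bar> / sqrt 2 = infdist t0 Lline"
        unfolding infdist_L \<delta>_def ..
      finally show ?thesis .
    qed
    show "\<exists>mstar. frechet_mean M X mstar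
           \<and> (\<forall>m'. frechet_mean M X m' \<longrightarrow> orbit m' = orbit mstar)
           \<and> (\<exists>c::real. mstar = t0 + c *\<^sub>R (1, -1))
           \<and> dQ t0 mstar = rho_tilde (infdist t0 Lline) s"
      using fm uniq cc dq by blast
  qed
  have p3: "\<forall>x\<in>{0..1}. gfun x \<ge> 0" using gfun_nonneg by auto
  have p4: "\<forall>d>0. (\<lambda>s. rho_tilde d s) \<sim>[at_top]
              (\<lambda>s. s * (2 / pi) * (LBINT r:{0..}. r\<^sup>2 * exp (- (r\<^sup>2) / 2)))"
    using part_a by blast
  have p5: "\<forall>d>0. \<forall>k::nat. (\<lambda>s. rho_tilde d s) \<in> o[at_right (0::real)](\<lambda>s. s ^ k)"
    using part_b by blast
  have p6: "\<exists>c. \<forall>s>0. rho_tilde 0 s = c * s"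
  proof (rule exI[of _ "2 * Psi 0"], intro allI impI)
    fix s :: real assume "0 < s"
    then show "rho_tilde 0 s = 2 * Psi 0 * s" using rho_formula[of s 0] by simp
  qed
  show ?thesis using p1 p2 p3 p4 p5 p6 by blast
qed

end
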